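(* Let $C$ be a cycle (oriented or not) and let $Ck$ be a diagram obtained from $C$ by adding a new vertex $k$ adjacent to some vertices of $C$. Let $A$ be a quasi-Cartan companion of $Ck$ with $\prod_{\{i,j\}\in C}(-A_{ij})<0$. Suppose $k$ is adjacent to an even number of vertices of $C$, and among them there are two vertices that are not adjacent in $C$. Then $Ck$ contains a cycle $C'$ containing $k$ with $\prod_{\{i,j\}\in C'}(-A_{ij})>0$.
   Context: A diagram is a finite directed graph without loops or 2-cycles with positive integer edge weights such that the product of weights along each cycle is a perfect square; a cycle is an induced subgraph on $r\ge3$ vertices whose underlying graph is a cycle. A quasi-Cartan matrix is an integer matrix $A$ with diagonal entries $2$ such that $DA$ is symmetric for a diagonal $D$ with positive entries (so $\mathrm{sgn}A_{ij}=\mathrm{sgn}A_{ji}$). A quasi-Cartan companion of a diagram $\Gamma$ is a quasi-Cartan $A$ with $|A_{ij}|=|B_{ij}|$ ($i\ne j$) for a skew-symmetrizable $B$ whose diagram ($i\to j$ iff $B_{ij}>0$, weight $|B_{ij}B_{ji}|$) is $\Gamma$. *)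

theory Defs
  imports Complex_Main
begin

text \<open>A diagram on the finite vertex set V is given by a weight function w:
  there is an arrow i \<rightarrow> j iff w i j > 0, and then w i j is its (positive integer) weight.\<close>

definition adj :: "('a \<Rightarrow> 'a \<Rightarrow> nat) \<Rightarrow> 'a \<Rightarrow> 'a \<Rightarrow> bool" where
  "adj w i j \<longleftrightarrow> w i j > 0 \<or> w j i > 0"

definition is_cycle :: "('a \<Rightarrow> 'a \<Rightarrow> nat) \<Rightarrow> 'a set \<Rightarrow> bool" where
  "is_cycle w S \<longleftrightarrow> (\<exists>vs. distinct vs \<and> set vs = S \<and> length vs \<ge> 3 \<and>
     (\<forall>i<length vs. \<forall>j<length vs.
        adj w (vs ! i) (vs ! j) \<longleftrightarrow>
          (j = Suc i mod length vs \<or> i = Suc j mod length vs)))"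

definition arrows_in :: "('a \<Rightarrow> 'a \<Rightarrow> nat) \<Rightarrow> 'a set \<Rightarrow> ('a \<times> 'a) set" where
  "arrows_in w S = {(i, j). i \<in> S \<and> j \<in> S \<and> w i j > 0}"

definition is_diagram :: "'a set \<Rightarrow> ('a \<Rightarrow> 'a \<Rightarrow> nat) \<Rightarrow> bool" where
  "is_diagram V w \<longleftrightarrow> finite V \<and>
     (\<forall>i j. w i j > 0 \<longrightarrow> i \<in> V \<and> j \<in> V) \<and>
     (\<forall>i. w i i = 0) \<and>
     (\<forall>i j. \<not> (w i j > 0 \<and> w j i > 0)) \<and>
     (\<forall>S \<subseteq> V. is_cycle w S \<longrightarrow> (\<exists>m::nat. (\<Prod>(i, j)\<in>arrows_in w S. w i j) = m ^ 2))"

definition skew_symmetrizable :: "'a set \<Rightarrow> ('a \<Rightarrow> 'a \<Rightarrow> int) \<Rightarrow> bool" where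
  "skew_symmetrizable V B \<longleftrightarrow> (\<exists>d :: 'a \<Rightarrow> real. (\<forall>i\<in>V. d i > 0) \<and>
     (\<forall>i\<in>V. \<forall>j\<in>V. d i * of_int (B i j) = - (d j * of_int (B j i))))"

definition diagram_of :: "'a set \<Rightarrow> ('a \<Rightarrow> 'a \<Rightarrow> int) \<Rightarrow> 'a \<Rightarrow> 'a \<Rightarrow> nat" where
  "diagram_of V B i j = (if i \<in> V \<and> j \<in> V \<and> B i j > 0 then nat \<bar>B i j * B j i\<bar> else 0)"

definition quasi_cartan :: "'a set \<Rightarrow> ('a \<Rightarrow> 'a \<Rightarrow> int) \<Rightarrow> bool" where
  "quasi_cartan V A \<longleftrightarrow> (\<forall>i\<in>V. A i i = 2) \<and>
     (\<exists>d :: 'a \<Rightarrow> real. (\<forall>i\<in>V. d i > 0) \<and>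
        (\<forall>i\<in>V. \<forall>j\<in>V. d i * of_int (A i j) = d j * of_int (A j i)))"

definition quasi_cartan_companion ::
    "'a set \<Rightarrow> ('a \<Rightarrow> 'a \<Rightarrow> nat) \<Rightarrow> ('a \<Rightarrow> 'a \<Rightarrow> int) \<Rightarrow> bool" where
  "quasi_cartan_companion V w A \<longleftrightarrow> quasi_cartan V A \<and>
     (\<exists>B. skew_symmetrizable V B \<and> diagram_of V B = w \<and>
          (\<forall>i\<in>V. \<forall>j\<in>V. i \<noteq> j \<longrightarrow> \<bar>A i j\<bar> = \<bar>B i j\<bar>))"

text \<open>The product over the edges {i,j} of the cycle S of (- A i j), each edge taken in
  the orientation of its arrow (the sign does not depend on this choice).\<close>
definition cycle_prod :: "('a \<Rightarrow> 'a \<Rightarrow> nat) \<Rightarrow> ('a \<Rightarrow> 'a \<Rightarrow> int) \<Rightarrow> 'a set \<Rightarrow> int" where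
  "cycle_prod w A S = (\<Prod>(i, j)\<in>arrows_in w S. - A i j)"

end

theory Submission
  imports Defs
begin



lemma sgn_prod_int: "sgn (prod (f::'b \<Rightarrow> int) S) = (\<Prod>x\<in>S. sgn (f x))"
proof (cases "finite S")
  case True then show ?thesis by (induction S rule: finite_induct) (auto simp: sgn_mult)
qed simp

lemma mod_close_aux: "(y::nat) \<le> z \<Longrightarrow> n dvd (z - y) \<Longrightarrow> z < y + n \<Longrightarrow> y = z"
proof -
  assume h: "y \<le> z" "n dvd (z - y)" "z < y + n"
  then obtain c where c: "z - y = n * c" by (auto elim: dvdE)
  show "y = z"
  proof (cases c)
    case 0 then show ?thesis using c h by simp
  next
    case (Suc c')
    then have "n * c \<ge> n" by simp
    then show ?thesis using c h by linarith
  qed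
qed

lemma mod_close: "(y::nat) mod n = z mod n \<Longrightarrow> y < z + n \<Longrightarrow> z < y + n \<Longrightarrow> y = z"
proof (cases "y \<le> z")
  case True
  assume h: "y mod n = z mod n" "z < y + n"
  then have "n dvd (z - y)" using True mod_eq_dvd_iff_nat[of y z n] by simp
  then show ?thesis using mod_close_aux True h by blast
next
  case False
  assume h: "y mod n = z mod n" "y < z + n"
  then have "n dvd (y - z)" using False mod_eq_dvd_iff_nat[of z y n] by simp
  then show ?thesis using mod_close_aux[of z y n] False h by simp
qed

lemma cycle_sign:
  fixes w :: "'a \<Rightarrow> 'a \<Rightarrow> nat" and A :: "'a \<Rightarrow> 'a \<Rightarrow> int"
  assumes nd: "\<forall>i j. \<not> (w i j > 0 \<and> w j i > 0)"
    and dist: "distinct vs" and setv: "set vs = S" and len: "length vs \<ge> 3"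
    and adjc: "\<forall>i<length vs. \<forall>j<length vs. adj w (vs ! i) (vs ! j) \<longleftrightarrow>
          (j = Suc i mod length vs \<or> i = Suc j mod length vs)"
    and sym: "\<forall>a\<in>S. \<forall>b\<in>S. adj w a b \<longrightarrow> sgn (A a b) = sgn (A b a)"
  shows "sgn (cycle_prod w A S) = (\<Prod>i<length vs. sgn (- A (vs!i) (vs!(Suc i mod length vs))))"
proof -
  define L where "L = length vs"
  define f where "f i = (if 0 < w (vs!i) (vs!(Suc i mod L)) then (vs!i, vs!(Suc i mod L))
      else (vs!(Suc i mod L), vs!i))" for i
  have L3: "L \<ge> 3" using len L_def by simp
  have sucL: "Suc i mod L < L" for i using L3 by simp
  have adjs: "adj w (vs!i) (vs!(Suc i mod L))" if "i < L" for i
    using adjc that sucL L_def by auto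
  have inS: "vs!i \<in> S" if "i < L" for i using that setv L_def by auto
  have bij: "bij_betw f {..<L} (arrows_in w S)"
  proof (rule bij_betw_imageI)
    show "inj_on f {..<L}"
    proof (rule inj_onI)
      fix i j assume i: "i \<in> {..<L}" and j: "j \<in> {..<L}" and e: "f i = f j"
      have ar: "\<not> (i = Suc j mod L \<and> j = Suc i mod L)"
        using i j L3 by (auto simp: mod_Suc split: if_splits)
      have eqv: "vs!x = vs!y \<longleftrightarrow> x = y" if "x < L" "y < L" for x y
        using dist that L_def nth_eq_iff_index_eq by blast
      have c4: "(vs!i = vs!j \<and> vs!(Suc i mod L) = vs!(Suc j mod L)) \<or>
          (vs!i = vs!(Suc j mod L) \<and> vs!(Suc i mod L) = vs!j)"
        using e unfolding f_def by (simp split: if_splits)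
      have il: "i < L" and jl: "j < L" using i j by auto
      show "i = j"
      proof (cases "vs!i = vs!j")
        case True then show ?thesis using eqv[OF il jl] by simp
      next
        case False
        then have "vs!i = vs!(Suc j mod L)" "vs!(Suc i mod L) = vs!j" using c4 by auto
        then have "i = Suc j mod L" "Suc i mod L = j"
          using eqv[OF il sucL[of j]] eqv[OF sucL[of i] jl] by auto
        then show ?thesis using ar by simp
      qed
    qed
    show "f ` {..<L} = arrows_in w S"
    proof
      show "f ` {..<L} \<subseteq> arrows_in w S"
      proof
        fix x assume "x \<in> f ` {..<L}"
        then obtain i where i: "i < L" "x = f i" by auto
        show "x \<in> arrows_in w S"
          using adjs[OF i(1)] inS[OF i(1)] inS[OF sucL[of i]] i(2)
          unfolding f_def arrows_in_def adj_def by auto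
      qed
      show "arrows_in w S \<subseteq> f ` {..<L}"
      proof
        fix x assume "x \<in> arrows_in w S"
        then obtain a b where x: "x = (a,b)" "a \<in> S" "b \<in> S" "w a b > 0"
          unfolding arrows_in_def by auto
        obtain i where i: "i < L" "a = vs!i" using x setv L_def by (auto simp: in_set_conv_nth)
        obtain j where j: "j < L" "b = vs!j" using x setv L_def by (auto simp: in_set_conv_nth)
        have "adj w a b" using x by (simp add: adj_def)
        then have c: "j = Suc i mod L \<or> i = Suc j mod L" using adjc i j L_def by auto
        show "x \<in> f ` {..<L}"
        proof (cases "j = Suc i mod L")
          case True
          then have "f i = x" using x i j unfolding f_def by auto
          then show ?thesis using i by auto
        next
          case False
          then have ij: "i = Suc j mod L" using c by auto
          have "\<not> w b a > 0" using spec[OF spec[OF nd, of b], of a] x(4) by simp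
          then have "f j = x" using x i j ij unfolding f_def by auto
          then show ?thesis using j by auto
        qed
      qed
    qed
  qed
  have "sgn (cycle_prod w A S) = (\<Prod>p\<in>arrows_in w S. sgn (- A (fst p) (snd p)))"
    unfolding cycle_prod_def sgn_prod_int by (simp add: case_prod_beta)
  also have "\<dots> = (\<Prod>i<L. sgn (- A (fst (f i)) (snd (f i))))"
    using prod.reindex_bij_betw[OF bij, of "\<lambda>p. sgn (- A (fst p) (snd p))"] by simp
  also have "\<dots> = (\<Prod>i<L. sgn (- A (vs!i) (vs!(Suc i mod L))))"
  proof (rule prod.cong)
    fix i assume "i \<in> {..<L}"
    then have i: "i < L" by simp
    have "sgn (A (vs!i) (vs!(Suc i mod L))) = sgn (A (vs!(Suc i mod L)) (vs!i))"
      using sym adjs[OF i] inS[OF i] inS[OF sucL[of i]] by auto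
    then show "sgn (- A (fst (f i)) (snd (f i))) = sgn (- A (vs!i) (vs!(Suc i mod L)))"
      unfolding f_def by (simp add: sgn_minus)
  qed simp
  finally show ?thesis using L_def by simp
qed


lemma adj_sym: "adj w x y = adj w y x" by (auto simp: adj_def)

lemma arc_cycle:
  fixes vs :: "'a list" and w :: "'a \<Rightarrow> 'a \<Rightarrow> nat"
  assumes dist: "distinct vs" and n: "length vs = n" and n3: "n \<ge> 3"
    and adjc: "\<forall>i<n. \<forall>j<n. adj w (vs!i) (vs!j) \<longleftrightarrow> (j = Suc i mod n \<or> i = Suc j mod n)"
    and knew: "k \<notin> set vs" and wkk: "w k k = 0"
    and ab: "a < b" "b + 2 \<le> a + n"
    and ka: "adj w k (vs!(a mod n))" and kb: "adj w k (vs!(b mod n))"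
    and kmid: "\<forall>x. a < x \<longrightarrow> x < b \<longrightarrow> \<not> adj w k (vs!(x mod n))"
  defines "ws \<equiv> k # map (\<lambda>j. vs!(j mod n)) [a..<Suc b]"
  shows "distinct ws \<and> length ws \<ge> 3 \<and> (\<forall>i<length ws. \<forall>j<length ws.
     adj w (ws!i) (ws!j) \<longleftrightarrow> (j = Suc i mod length ws \<or> i = Suc j mod length ws))"
proof -
  have n0: "n > 0" using n3 by simp
  have len: "length ws = b - a + 2" unfolding ws_def using ab by simp
  have ws0: "ws!0 = k" unfolding ws_def by simp
  have wsS: "ws!(Suc i) = vs!((a+i) mod n)" if "i \<le> b - a" for i
  proof -
    have "i < length [a..<Suc b]" using that ab by simp
    then show ?thesis unfolding ws_def using that ab by (simp del: upt_Suc add: nth_map nth_upt)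
  qed
  have adjidx: "adj w (vs!(x mod n)) (vs!(y mod n)) \<longleftrightarrow> (y = Suc x \<or> x = Suc y)"
    if "a \<le> x" "x \<le> b" "a \<le> y" "y \<le> b" for x y
  proof -
    have "adj w (vs!(x mod n)) (vs!(y mod n)) \<longleftrightarrow>
        (y mod n = Suc x mod n \<or> x mod n = Suc y mod n)"
      using adjc n0 by (simp add: mod_Suc_eq)
    also have "(y mod n = Suc x mod n) \<longleftrightarrow> y = Suc x"
      using mod_close[of y n "Suc x"] that ab by auto
    also have "(x mod n = Suc y mod n) \<longleftrightarrow> x = Suc y"
      using mod_close[of x n "Suc y"] that ab by auto
    finally show ?thesis .
  qed
  have inj: "inj_on (\<lambda>j. vs!(j mod n)) {a..<Suc b}"
  proof (rule inj_onI)
    fix x y assume x: "x \<in> {a..<Suc b}" and y: "y \<in> {a..<Suc b}"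
      and e: "vs!(x mod n) = vs!(y mod n)"
    then have "x mod n = y mod n" using dist n n0 nth_eq_iff_index_eq by fastforce
    then show "x = y" using mod_close[of x n y] x y ab by auto
  qed
  have notk: "k \<notin> set (map (\<lambda>j. vs!(j mod n)) [a..<Suc b])"
    using knew n n0 by auto
  have d: "distinct ws" unfolding ws_def using inj notk by (simp del: upt_Suc add: distinct_map)
  have modL: "m mod L = (if m = L then 0 else m)" if "m \<le> L" for m L :: nat
    using that by auto
  have ad: "adj w (ws!i) (ws!j) \<longleftrightarrow> (j = Suc i mod length ws \<or> i = Suc j mod length ws)"
    if i: "i < length ws" and j: "j < length ws" for i j
  proof (cases i)
    case 0
    note i0 = this
    show ?thesis
    proof (cases j)
      case 0
      then show ?thesis using i0 ws0 wkk len ab by (simp add: adj_def)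
    next
      case (Suc j')
      have jb: "j' \<le> b - a" using j Suc len by simp
      have "adj w k (vs!((a+j') mod n)) \<longleftrightarrow> (j' = 0 \<or> j' = b - a)"
        using ka kb kmid[rule_format, of "a+j'"] jb ab by (cases "j' = 0"; cases "j' = b - a") auto
      moreover have "(j = Suc i mod length ws \<or> i = Suc j mod length ws) \<longleftrightarrow> (j' = 0 \<or> j' = b - a)"
        using i0 Suc len jb ab modL[of "Suc j" "length ws"] by auto
      ultimately show ?thesis using i0 Suc ws0 wsS[OF jb] by simp
    qed
  next
    case (Suc i')
    note iS = this
    have ib: "i' \<le> b - a" using i Suc len by simp
    show ?thesis
    proof (cases j)
      case 0
      have "adj w k (vs!((a+i') mod n)) \<longleftrightarrow> (i' = 0 \<or> i' = b - a)"
        using ka kb kmid[rule_format, of "a+i'"] ib ab by (cases "i' = 0"; cases "i' = b - a") auto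
      moreover have "(j = Suc i mod length ws \<or> i = Suc j mod length ws) \<longleftrightarrow> (i' = 0 \<or> i' = b - a)"
        using 0 iS len ib ab modL[of "Suc i" "length ws"] by auto
      ultimately show ?thesis using 0 iS ws0 wsS[OF ib] adj_sym by metis
    next
      case (Suc j')
      have jb: "j' \<le> b - a" using j Suc len by simp
      have "adj w (ws!i) (ws!j) \<longleftrightarrow> (a + j' = Suc (a + i') \<or> a + i' = Suc (a + j'))"
        using adjidx[of "a+i'" "a+j'"] ib jb ab iS Suc wsS by auto
      moreover have "(j = Suc i mod length ws \<or> i = Suc j mod length ws) \<longleftrightarrow> (j' = Suc i' \<or> i' = Suc j')"
        using iS Suc len ib jb ab modL[of "Suc i" "length ws"] modL[of "Suc j" "length ws"] by auto
      ultimately show ?thesis by auto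
    qed
  qed
  show ?thesis using d len ab ad by auto
qed



lemma prod_shift_ivl: "(\<Prod>i<m. f (a+i)) = prod (f::nat\<Rightarrow>int) {a..<a+m}"
  by (induction m) (auto simp: prod.atLeastLessThan_Suc)

lemma prod_periodic:
  fixes s :: "nat \<Rightarrow> int" and n p :: nat
  assumes per: "\<forall>j. s (j + n) = (s j::int)" and n0: "n > 0"
  shows "prod s {p..<p+n} = prod s {..<n}"
proof (induction p)
  case 0 then show ?case by (simp add: atLeast0LessThan)
next
  case (Suc p)
  have "prod s {Suc p..<Suc p + n} = prod s {Suc p..<p+n} * s (p+n)"
    using n0 by (simp add: prod.atLeastLessThan_Suc)
  also have "\<dots> = s p * prod s {Suc p..<p+n}" using per[rule_format, of p] by (simp only: mult.commute)
  also have "\<dots> = prod s {p..<p+n}" using n0 by (simp add: prod.atLeast_Suc_lessThan)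
  finally show ?case using Suc by simp
qed

lemma telescope:
  fixes q :: "nat \<Rightarrow> nat" and M :: nat
  assumes "\<forall>t<M. q t \<le> q (Suc t)"
  shows "q 0 \<le> q M \<and> (\<Prod>t<M. prod (s::nat\<Rightarrow>int) {q t..<q (Suc t)}) = prod s {q 0..<q M}"
  using assms
proof (induction M)
  case 0 then show ?case by simp
next
  case (Suc M)
  then have ih: "q 0 \<le> q M" "(\<Prod>t<M. prod s {q t..<q (Suc t)}) = prod s {q 0..<q M}"
    and st: "q M \<le> q (Suc M)" by auto
  show ?case using ih st prod.atLeastLessThan_concat[of "q 0" "q M" "q (Suc M)" s] by simp
qed



theorem mainTheorem14:
  fixes C :: "'a set" and k :: 'a
    and w :: "'a \<Rightarrow> 'a \<Rightarrow> nat" and A :: "'a \<Rightarrow> 'a \<Rightarrow> int"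
  assumes diag: "is_diagram (insert k C) w"
    and knew: "k \<notin> C"
    and cyc: "is_cycle w C"
    and comp: "quasi_cartan_companion (insert k C) w A"
    and neg: "cycle_prod w A C < 0"
    and even_nb: "even (card {v \<in> C. adj w k v})"
    and nonadj: "\<exists>u\<in>C. \<exists>v\<in>C. adj w k u \<and> adj w k v \<and> u \<noteq> v \<and> \<not> adj w u v"
  shows "\<exists>C'. C' \<subseteq> insert k C \<and> k \<in> C' \<and> is_cycle w C' \<and> cycle_prod w A C' > 0"
proof -
  let ?V = "insert k C"
  from cyc obtain vs where dist: "distinct vs" and setv: "set vs = C" and n3': "length vs \<ge> 3"
    and adjc0: "\<forall>i<length vs. \<forall>j<length vs. adj w (vs ! i) (vs ! j) \<longleftrightarrow>
          (j = Suc i mod length vs \<or> i = Suc j mod length vs)"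
    unfolding is_cycle_def by blast
  define n where "n = length vs"
  have n3: "n \<ge> 3" and n0: "n > 0" using n3' n_def by auto
  have adjc: "\<forall>i<n. \<forall>j<n. adj w (vs!i) (vs!j) \<longleftrightarrow> (j = Suc i mod n \<or> i = Suc j mod n)"
    using adjc0 n_def by simp
  have nd: "\<forall>i j. \<not> (w i j > 0 \<and> w j i > 0)" and wzero: "\<forall>i. w i i = 0"
    using diag unfolding is_diagram_def by auto
  from comp obtain d :: "'a \<Rightarrow> real" where dpos: "\<forall>i\<in>?V. d i > 0"
      and dsym: "\<forall>i\<in>?V. \<forall>j\<in>?V. d i * of_int (A i j) = d j * of_int (A j i)"
    unfolding quasi_cartan_companion_def quasi_cartan_def by blast
  from comp obtain B where Bw: "diagram_of ?V B = w"
      and AB: "\<forall>i\<in>?V. \<forall>j\<in>?V. i \<noteq> j \<longrightarrow> \<bar>A i j\<bar> = \<bar>B i j\<bar>"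
    unfolding quasi_cartan_companion_def by blast
  have symA: "sgn (A a b) = sgn (A b a)" if "a \<in> ?V" "b \<in> ?V" for a b
  proof -
    have e: "d a * of_int (A a b) = d b * of_int (A b a)" using dsym that by blast
    have da: "d a > 0" and db: "d b > 0" using dpos that by auto
    have p1: "0 < d a * of_int (A a b) \<longleftrightarrow> 0 < A a b" using da by (simp add: zero_less_mult_iff)
    have p2: "0 < d b * of_int (A b a) \<longleftrightarrow> 0 < A b a" using db by (simp add: zero_less_mult_iff)
    have n1: "d a * of_int (A a b) < 0 \<longleftrightarrow> A a b < 0" using da by (simp add: mult_less_0_iff)
    have n2: "d b * of_int (A b a) < 0 \<longleftrightarrow> A b a < 0" using db by (simp add: mult_less_0_iff)
    have "(A a b > 0 \<longleftrightarrow> A b a > 0) \<and> (A a b < 0 \<longleftrightarrow> A b a < 0)"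
      using p1 p2 n1 n2 e by simp
    then show ?thesis by (cases "A a b > 0"; cases "A a b < 0"; simp add: sgn_if)
  qed
  have symA': "sgn (- A a b) = sgn (- A b a)" if "a \<in> ?V" "b \<in> ?V" for a b
    using symA[OF that] by (simp add: sgn_minus)
  have nzA1: "A a b \<noteq> 0" if "a \<in> ?V" "b \<in> ?V" "w a b > 0" for a b
  proof -
    have ab: "a \<noteq> b" using that wzero by auto
    have "diagram_of ?V B a b > 0" using Bw that by simp
    then have "B a b > 0" unfolding diagram_of_def by (auto split: if_splits)
    then show ?thesis using AB that ab by fastforce
  qed
  have nzA: "A a b \<noteq> 0" if "a \<in> ?V" "b \<in> ?V" "adj w a b" for a b
  proof (cases "w a b > 0")
    case True then show ?thesis using nzA1 that by blast
  next
    case False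
    then have "w b a > 0" using that(3) unfolding adj_def by simp
    then have "A b a \<noteq> 0" using nzA1 that by blast
    then show ?thesis using symA[OF that(1,2)] by (auto simp: sgn_0_0)
  qed
  have vsV: "vs!i \<in> ?V" if "i < n" for i using that setv n_def by auto
  define s where "s j = sgn (- A (vs!(j mod n)) (vs!(Suc j mod n)))" for j
  define g where "g j = sgn (- A k (vs!(j mod n)))" for j
  have hC: "(\<Prod>i<n. s i) = -1"
  proof -
    have "sgn (cycle_prod w A C) = (\<Prod>i<n. sgn (- A (vs!i) (vs!(Suc i mod n))))"
      using cycle_sign[OF nd dist setv n3'] adjc0 symA setv n_def by auto
    also have "\<dots> = (\<Prod>i<n. s i)" unfolding s_def by (rule prod.cong) auto
    finally show ?thesis using neg by simp
  qed
  have sper: "\<forall>j. s (j + n) = s j"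
  proof
    fix j
    have "Suc (j+n) mod n = Suc j mod n" by (metis add_Suc mod_add_self2)
    then show "s (j + n) = s j" unfolding s_def by simp
  qed
  define N where "N = {i. i < n \<and> adj w k (vs!i)}"
  have finN: "finite N" unfolding N_def by simp
  define ps where "ps = sorted_list_of_set N"
  define M where "M = length ps"
  have setps: "set ps = N" unfolding ps_def using finN by simp
  have sps: "sorted_wrt (<) ps" unfolding ps_def by simp
  have McN: "M = card N" unfolding M_def ps_def by simp
  have imgN: "{v \<in> C. adj w k v} = (\<lambda>i. vs!i) ` N"
    unfolding N_def using setv n_def by (auto simp: in_set_conv_nth)
  have injN: "inj_on (\<lambda>i. vs!i) N"
    by (rule inj_on_nth[OF dist]) (auto simp: N_def n_def)
  have evM: "even M" using even_nb imgN card_image[OF injN] McN by simp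
  obtain u v where uv: "u \<in> C" "v \<in> C" "adj w k u" "adj w k v" "u \<noteq> v" "\<not> adj w u v"
    using nonadj by blast
  obtain iu where iu: "iu < n" "u = vs!iu" using uv setv n_def by (auto simp: in_set_conv_nth)
  obtain iv where iv: "iv < n" "v = vs!iv" using uv setv n_def by (auto simp: in_set_conv_nth)
  have iuN: "iu \<in> N" "iv \<in> N" "iu \<noteq> iv" using iu iv uv unfolding N_def by auto
  have M2: "M \<ge> 2"
  proof -
    have "card {iu, iv} \<le> card N" using iuN finN by (intro card_mono) auto
    then show ?thesis using iuN McN by simp
  qed
  have psmono: "ps!i < ps!j" if "i < j" "j < M" for i j
    using sorted_wrt_nth_less[OF sps that[unfolded M_def]] .
  have psle: "ps!i + (j - i) \<le> ps!j" if "i \<le> j" "j < M" for i j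
  proof -
    have all: "\<forall>e. i + e < M \<longrightarrow> ps!i + e \<le> ps!(i+e)"
    proof
      fix e show "i + e < M \<longrightarrow> ps!i + e \<le> ps!(i+e)"
      proof (induction e)
        case 0 then show ?case by simp
      next
        case (Suc e)
        then show ?case using psmono[of "i+e" "i + Suc e"] by auto
      qed
    qed
    show ?thesis using spec[OF all, of "j - i"] that by simp
  qed
  have psle': "ps!i \<le> ps!j" if "i \<le> j" "j < M" for i j using psle[OF that] by simp
  have psN: "ps!i \<in> N" if "i < M" for i using that setps M_def nth_mem by blast
  have psn: "ps!i < n" if "i < M" for i using psN[OF that] N_def by simp
  have Nps: "\<exists>j<M. ps!j = x" if "x \<in> N" for x using that setps M_def by (auto simp: in_set_conv_nth)
  define q where "q t = (if t < M then ps!t else ps!0 + n)" for t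
  have qM: "q M = ps!0 + n" unfolding q_def by simp
  have q0: "q 0 = ps!0" unfolding q_def using M2 by simp
  have gap: "q (Suc t) + 2 \<le> q t + n" if "t < M" for t
  proof (cases "M = 2")
    case True
    have pseq: "ps = [ps!0, ps!1]"
    proof (rule nth_equalityI)
      show "length ps = length [ps!0, ps!1]" using True M_def by simp
      fix i assume "i < length ps"
      then have "i = 0 \<or> i = 1" using True M_def by auto
      then show "ps!i = [ps!0, ps!1]!i" by auto
    qed
    have setN: "N = {ps!0, ps!1}" using setps pseq by (metis list.set(1) list.set(2))
    have cs: "(iu = ps!0 \<and> iv = ps!1) \<or> (iu = ps!1 \<and> iv = ps!0)" using iuN setN by auto
    have "\<not> adj w (vs!(ps!0)) (vs!(ps!1))"
      using cs uv(6) iu(2) iv(2) adj_sym[of w "vs!(ps!0)" "vs!(ps!1)"] by auto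
    then have na: "\<not> (ps!1 = Suc (ps!0) mod n \<or> ps!0 = Suc (ps!1) mod n)"
      using adjc psn True by auto
    have lt: "ps!0 < ps!1" "ps!1 < n" using psmono psn True by auto
    have "Suc (ps!0) mod n = Suc (ps!0)" using lt by simp
    then have h1: "ps!0 + 2 \<le> ps!1" using na lt by auto
    have h2: "ps!1 + 2 \<le> ps!0 + n"
    proof (rule ccontr)
      assume "\<not> ?thesis"
      then have "ps!1 = n - 1" "ps!0 = 0" using lt by auto
      then show False using na n0 by simp
    qed
    show ?thesis using that True h1 h2 unfolding q_def by (cases t) auto
  next
    case False
    then have M4: "M \<ge> 4" using evM M2 by presburger
    show ?thesis
    proof (cases "Suc t < M")
      case True
      have "ps!(Suc t) + (M - 1 - Suc t) \<le> ps!(M - 1)" using psle[of "Suc t" "M-1"] True by simp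
      moreover have "ps!(M-1) < n" using psn M4 by simp
      moreover have "ps!0 + t \<le> ps!t" using psle[of 0 t] that by simp
      ultimately show ?thesis using True that M4 unfolding q_def by simp
    next
      case False
      then have t: "t = M - 1" using that by simp
      have "ps!0 + (M - 1) \<le> ps!(M-1)" using psle[of 0 "M-1"] M4 by simp
      then show ?thesis using t M4 unfolding q_def by simp
    qed
  qed
  have qlt: "q t < q (Suc t)" if "t < M" for t
  proof -
    have "ps!t < n" using psn that by blast
    then show ?thesis using that psmono unfolding q_def by auto
  qed
  have qa: "q t < n" "q t \<in> N" if "t < M" for t using that psn psN unfolding q_def by auto
  have qb: "q (Suc t) mod n \<in> N" if "t < M" for t
    using that psn psN M2 unfolding q_def by (auto simp: mod_less)
  have kmid: "\<not> adj w k (vs!(x mod n))" if "t < M" "q t < x" "x < q (Suc t)" for t x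
  proof
    assume ad: "adj w k (vs!(x mod n))"
    then have "x mod n \<in> N" unfolding N_def using n0 by simp
    then obtain j where j: "j < M" "ps!j = x mod n" using Nps by blast
    show False
    proof (cases "Suc t < M")
      case True
      have "q (Suc t) = ps!(Suc t)" using True unfolding q_def by simp
      moreover have "ps!(Suc t) < n" using psn True by blast
      ultimately have xn: "x < n" using that(3) by linarith
      then have "ps!j = x" using j by simp
      then show False using that True j psle'[of j t] psle'[of "Suc t" j] unfolding q_def
        by (cases "j \<le> t") auto
    next
      case False
      then have t: "Suc t = M" using that by simp
      show False
      proof (cases "x < n")
        case True
        then show False using j that t psle'[of j t] unfolding q_def by auto
      next
        case False
        have "ps!0 < n" using psn t by auto
        then have "x - n < n" using that t unfolding q_def by auto
        then have "x mod n = x - n" using False by (simp add: le_mod_geq)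
        then show False using j that t psle'[of 0 j] False unfolding q_def by auto
      qed
    qed
  qed
  define ws where "ws t = k # map (\<lambda>j. vs!(j mod n)) [q t..<Suc (q (Suc t))]" for t
  have knv: "k \<notin> set vs" using knew setv by simp
  have wscyc: "distinct (ws t) \<and> length (ws t) \<ge> 3 \<and> (\<forall>i<length (ws t). \<forall>j<length (ws t).
     adj w ((ws t)!i) ((ws t)!j) \<longleftrightarrow> (j = Suc i mod length (ws t) \<or> i = Suc j mod length (ws t)))"
    if t: "t < M" for t
    unfolding ws_def
  proof (rule arc_cycle[OF dist n_def[symmetric] n3 adjc knv])
    show "w k k = 0" using wzero by simp
    show "q t < q (Suc t)" using qlt t .
    show "q (Suc t) + 2 \<le> q t + n" using gap t .
    show "adj w k (vs ! (q t mod n))" using qa[OF t] N_def by simp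
    show "adj w k (vs ! (q (Suc t) mod n))" using qb[OF t] N_def by simp
    show "\<forall>x. q t < x \<longrightarrow> x < q (Suc t) \<longrightarrow> \<not> adj w k (vs ! (x mod n))"
      using kmid t by blast
  qed
  have wsV: "set (ws t) \<subseteq> ?V" for t unfolding ws_def using setv n_def n0 by auto
  have wsk: "k \<in> set (ws t)" for t unfolding ws_def by simp
  have wsis: "is_cycle w (set (ws t))" if "t < M" for t
    using wscyc[OF that] unfolding is_cycle_def by blast
  define \<sigma> where "\<sigma> t = sgn (cycle_prod w A (set (ws t)))" for t
  have sig: "\<sigma> t = g (q t) * prod s {q t..<q (Suc t)} * g (q (Suc t))" if t: "t < M" for t
  proof -
    define a where "a = q t"
    define b where "b = q (Suc t)"
    define m where "m = b - a"
    have ab: "a < b" using qlt t a_def b_def by simp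
    have L: "length (ws t) = Suc (Suc m)" unfolding ws_def a_def b_def m_def using ab a_def b_def
      by simp
    have ws0: "(ws t)!0 = k" unfolding ws_def by simp
    have wsS: "(ws t)!(Suc i) = vs!((a+i) mod n)" if "i \<le> m" for i
    proof -
      have "i < length [a..<Suc b]" using that ab m_def by simp
      then show ?thesis unfolding ws_def a_def b_def using that ab m_def a_def b_def
        by (simp del: upt_Suc add: nth_map nth_upt)
    qed
    have "\<sigma> t = (\<Prod>i<length (ws t). sgn (- A ((ws t)!i) ((ws t)!(Suc i mod length (ws t)))))"
    proof -
      have symS: "\<forall>a\<in>set (ws t). \<forall>b\<in>set (ws t). adj w a b \<longrightarrow> sgn (A a b) = sgn (A b a)"
        using symA wsV[of t] by (meson subsetD)
      have wc: "distinct (ws t)" "3 \<le> length (ws t)"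
        "\<forall>i<length (ws t). \<forall>j<length (ws t). adj w ((ws t)!i) ((ws t)!j) \<longleftrightarrow>
          (j = Suc i mod length (ws t) \<or> i = Suc j mod length (ws t))"
        using wscyc[OF t] by auto
      show ?thesis unfolding \<sigma>_def by (rule cycle_sign[OF nd wc(1) refl wc(2) wc(3) symS])
    qed
    also have "\<dots> = (\<Prod>i<Suc (Suc m). sgn (- A ((ws t)!i) ((ws t)!(Suc i mod Suc (Suc m)))))"
      using L by simp
    also have "\<dots> = sgn (- A k (vs!(a mod n))) *
        (\<Prod>i<m. sgn (- A ((ws t)!(Suc i)) ((ws t)!(Suc (Suc i))))) *
        sgn (- A (vs!((a+m) mod n)) k)"
    proof -
      have e1: "(\<Prod>i<m. sgn (- A ((ws t)!(Suc i)) ((ws t)!(Suc (Suc i) mod Suc (Suc m))))) =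
          (\<Prod>i<m. sgn (- A ((ws t)!(Suc i)) ((ws t)!(Suc (Suc i)))))"
        by (rule prod.cong) auto
      show ?thesis
        unfolding prod.lessThan_Suc[of _ "Suc m"] prod.lessThan_Suc_shift[of _ m]
        using e1 ws0 wsS[of 0] wsS[of m] by simp
    qed
    also have "(\<Prod>i<m. sgn (- A ((ws t)!(Suc i)) ((ws t)!(Suc (Suc i))))) = (\<Prod>i<m. s (a+i))"
    proof (rule prod.cong)
      fix i assume "i \<in> {..<m}"
      then have i: "i < m" by simp
      show "sgn (- A ((ws t)!(Suc i)) ((ws t)!(Suc (Suc i)))) = s (a+i)"
        using wsS[of i] wsS[of "Suc i"] i unfolding s_def by simp
    qed simp
    also have "(\<Prod>i<m. s (a+i)) = prod s {a..<b}" using prod_shift_ivl[of s a m] m_def ab by simp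
    also have "sgn (- A k (vs!(a mod n))) = g (q t)" unfolding g_def a_def by simp
    also have "sgn (- A (vs!((a+m) mod n)) k) = g (q (Suc t))"
      unfolding g_def using symA'[of k "vs!(b mod n)"] vsV[of "b mod n"] n0 m_def ab b_def
      by simp
    finally show ?thesis using a_def b_def by simp
  qed
  have gnz: "g (q t) * g (q t) = 1" if "t < M" for t
  proof -
    have "A k (vs!(q t mod n)) \<noteq> 0" using nzA[of k "vs!(q t mod n)"] qa[OF that] vsV N_def
      by simp
    then show ?thesis unfolding g_def by (auto simp: sgn_if)
  qed
  have Mpos: "M > 0" using M2 by simp
  have G: "(\<Prod>t<M. g (q (Suc t))) = (\<Prod>t<M. g (q t))"
  proof -
    have g0: "g (q M) = g (q 0)" using qM q0 unfolding g_def by simp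
    have g0nz: "g (q 0) \<noteq> 0" using gnz[OF Mpos] by auto
    have "(\<Prod>t<M. g (q (Suc t))) * g (q 0) = (\<Prod>t<Suc M. g (q t))"
      unfolding prod.lessThan_Suc_shift by simp
    also have "\<dots> = (\<Prod>t<M. g (q t)) * g (q 0)" using g0 by simp
    finally show ?thesis using g0nz by simp
  qed
  have GG: "(\<Prod>t<M. g (q t)) * (\<Prod>t<M. g (q t)) = 1"
    unfolding prod.distrib[symmetric] using gnz by simp
  have T: "(\<Prod>t<M. prod s {q t..<q (Suc t)}) = -1"
  proof -
    have "\<forall>t<M. q t \<le> q (Suc t)" using qlt less_imp_le by blast
    then have "(\<Prod>t<M. prod s {q t..<q (Suc t)}) = prod s {q 0..<q M}"
      using telescope by blast
    also have "\<dots> = prod s {..<n}" using qM q0 prod_periodic[OF sper n0] by simp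
    finally show ?thesis using hC by simp
  qed
  have prodsig: "(\<Prod>t<M. \<sigma> t) = -1"
  proof -
    have "(\<Prod>t<M. \<sigma> t) = (\<Prod>t<M. g (q t) * prod s {q t..<q (Suc t)} * g (q (Suc t)))"
      using sig by simp
    also have "\<dots> = (\<Prod>t<M. g (q t)) * (\<Prod>t<M. prod s {q t..<q (Suc t)}) * (\<Prod>t<M. g (q (Suc t)))"
      by (simp add: prod.distrib)
    also have "\<dots> = -1" using G GG T by (simp add: algebra_simps)
    finally show ?thesis .
  qed
  show ?thesis
  proof (rule ccontr)
    assume no: "\<not> ?thesis"
    have neg1: "\<sigma> t = -1" if "t < M" for t
    proof -
      have "\<not> cycle_prod w A (set (ws t)) > 0" using no wsV wsk wsis[OF that] by blast
      then have "\<sigma> t \<le> 0" unfolding \<sigma>_def by (simp add: sgn_if)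
      moreover have "\<sigma> t \<noteq> 0"
      proof
        assume "\<sigma> t = 0"
        then have "(\<Prod>t<M. \<sigma> t) = 0" using that by (intro prod_zero) auto
        then show False using prodsig by simp
      qed
      moreover have "\<sigma> t \<in> {-1, 0, 1}" unfolding \<sigma>_def by (simp add: sgn_if)
      ultimately show ?thesis by auto
    qed
    then have "(\<Prod>t<M. \<sigma> t) = (\<Prod>t<M. -1)" by simp
    also have "\<dots> = 1" using evM by simp
    finally show False using prodsig by simp
  qed
qed

end
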